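(* Let $\kappa$ be a cardinal. Let $(A_\alpha)_{\alpha\in\mathrm{Ord}}$ be cpo's and $f_{\alpha,\beta}\colon A_\alpha\to A_\beta$ ($\alpha\le\beta$) cpo maps with $f_{\beta,\gamma}\circ f_{\alpha,\beta}=f_{\alpha,\gamma}$ for all $\alpha\le\beta\le\gamma$ and $f_{\alpha,\alpha}=\mathrm{id}_{A_\alpha}$. Suppose that $A_0=\kappa\cdot 3$ is the coproduct in $\mathbf{CPO}$ of $\kappa$ copies of the chain $3$; that for every ordinal $\alpha$, $f_{\alpha,\alpha+1}\colon A_\alpha\to A_{\alpha+1}$ is a coequalizer in $\mathbf{CPO}$ of some pair of cpo maps $2\to A_\alpha$; and that for every limit ordinal $\alpha$, $A_\alpha=\operatorname{colim}_{\beta<\alpha}A_\beta$ in $\mathbf{CPO}$ with colimit injections $f_{\beta,\alpha}$. Then for every ordinal $\alpha$: (i) if $\kappa$ is infinite, $|A_\alpha|\le 2^\kappa$; (ii) if $\kappa$ is finite, $|A_\alpha|\le 2\kappa+1$.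
   Context: A cpo is a poset in which every chain, including the empty chain, has a join (so every cpo has a least element $0$). A cpo map is a map preserving joins of all chains. $\mathbf{CPO}$ is the category of cpo's and cpo maps; it is complete and cocomplete, and coproducts are disjoint unions with least elements identified. $2$ is the chain $0<1$ and $3$ is the chain $0<1<2$. *)

theory Defs
  imports Main
begin

text \<open>Posets and cpos are represented by a carrier set together with an order relation.
  Maps are HOL functions; only their values on the carrier matter.\<close>

definition is_po :: "'a set \<Rightarrow> ('a \<Rightarrow> 'a \<Rightarrow> bool) \<Rightarrow> bool" where
  "is_po S r \<longleftrightarrow> (\<forall>x\<in>S. r x x) \<and>
     (\<forall>x\<in>S. \<forall>y\<in>S. r x y \<and> r y x \<longrightarrow> x = y) \<and>
     (\<forall>x\<in>S. \<forall>y\<in>S. \<forall>z\<in>S. r x y \<and> r y z \<longrightarrow> r x z)"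

definition is_chain :: "'a set \<Rightarrow> ('a \<Rightarrow> 'a \<Rightarrow> bool) \<Rightarrow> 'a set \<Rightarrow> bool" where
  "is_chain S r C \<longleftrightarrow> C \<subseteq> S \<and> (\<forall>x\<in>C. \<forall>y\<in>C. r x y \<or> r y x)"

definition is_join :: "'a set \<Rightarrow> ('a \<Rightarrow> 'a \<Rightarrow> bool) \<Rightarrow> 'a set \<Rightarrow> 'a \<Rightarrow> bool" where
  "is_join S r C x \<longleftrightarrow> x \<in> S \<and> (\<forall>c\<in>C. r c x) \<and> (\<forall>y\<in>S. (\<forall>c\<in>C. r c y) \<longrightarrow> r x y)"

definition is_cpo :: "'a set \<Rightarrow> ('a \<Rightarrow> 'a \<Rightarrow> bool) \<Rightarrow> bool" where
  "is_cpo S r \<longleftrightarrow> is_po S r \<and> (\<forall>C. is_chain S r C \<longrightarrow> (\<exists>x. is_join S r C x))"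

definition cpo_map :: "'a set \<Rightarrow> ('a \<Rightarrow> 'a \<Rightarrow> bool) \<Rightarrow> 'b set \<Rightarrow> ('b \<Rightarrow> 'b \<Rightarrow> bool) \<Rightarrow> ('a \<Rightarrow> 'b) \<Rightarrow> bool" where
  "cpo_map S r T s f \<longleftrightarrow> f ` S \<subseteq> T \<and>
     (\<forall>C x. is_chain S r C \<longrightarrow> is_join S r C x \<longrightarrow> is_join T s (f ` C) (f x))"

abbreviation two_set :: "bool set" where "two_set \<equiv> UNIV"
abbreviation two_le :: "bool \<Rightarrow> bool \<Rightarrow> bool" where "two_le \<equiv> (\<le>)"

text \<open>Coequalizer in CPO of g, h : 2 \<rightarrow> A, with universal property tested against all
  cpos whose carrier lives in type 'c.\<close>
definition is_coequalizer ::
  "'c itself \<Rightarrow> 'a set \<Rightarrow> ('a \<Rightarrow> 'a \<Rightarrow> bool) \<Rightarrow> (bool \<Rightarrow> 'a) \<Rightarrow> (bool \<Rightarrow> 'a) \<Rightarrow>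
   'a set \<Rightarrow> ('a \<Rightarrow> 'a \<Rightarrow> bool) \<Rightarrow> ('a \<Rightarrow> 'a) \<Rightarrow> bool" where
  "is_coequalizer (_::'c itself) A r g h Q q e \<longleftrightarrow>
     cpo_map A r Q q e \<and> (\<forall>x. e (g x) = e (h x)) \<and>
     (\<forall>(C::'c set) s k. is_cpo C s \<and> cpo_map A r C s k \<and> (\<forall>x. k (g x) = k (h x)) \<longrightarrow>
        (\<exists>u. cpo_map Q q C s u \<and> (\<forall>a\<in>A. u (e a) = k a) \<and>
             (\<forall>u'. cpo_map Q q C s u' \<and> (\<forall>a\<in>A. u' (e a) = k a) \<longrightarrow> (\<forall>y\<in>Q. u' y = u y))))"

text \<open>Colimit in CPO of the chain diagram (A \<beta>, f \<beta> \<gamma>) for \<beta> \<le> \<gamma> < \<alpha>, with cocone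
  (f \<beta> \<alpha>)_{\<beta><\<alpha>}; universal property tested against cpos with carrier in type 'c.\<close>
definition is_chain_colimit ::
  "'c itself \<Rightarrow> ('o::linorder \<Rightarrow> 'a set) \<Rightarrow> ('o \<Rightarrow> 'a \<Rightarrow> 'a \<Rightarrow> bool) \<Rightarrow> ('o \<Rightarrow> 'o \<Rightarrow> 'a \<Rightarrow> 'a) \<Rightarrow> 'o \<Rightarrow> bool" where
  "is_chain_colimit (_::'c itself) A le f \<alpha> \<longleftrightarrow>
     (\<forall>\<beta><\<alpha>. cpo_map (A \<beta>) (le \<beta>) (A \<alpha>) (le \<alpha>) (f \<beta> \<alpha>)) \<and>
     (\<forall>\<beta> \<gamma>. \<beta> \<le> \<gamma> \<and> \<gamma> < \<alpha> \<longrightarrow> (\<forall>x\<in>A \<beta>. f \<gamma> \<alpha> (f \<beta> \<gamma> x) = f \<beta> \<alpha> x)) \<and>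
     (\<forall>(C::'c set) s (k::'o \<Rightarrow> 'a \<Rightarrow> 'c).
        is_cpo C s \<and> (\<forall>\<beta><\<alpha>. cpo_map (A \<beta>) (le \<beta>) C s (k \<beta>)) \<and>
        (\<forall>\<beta> \<gamma>. \<beta> \<le> \<gamma> \<and> \<gamma> < \<alpha> \<longrightarrow> (\<forall>x\<in>A \<beta>. k \<gamma> (f \<beta> \<gamma> x) = k \<beta> x)) \<longrightarrow>
        (\<exists>u. cpo_map (A \<alpha>) (le \<alpha>) C s u \<and> (\<forall>\<beta><\<alpha>. \<forall>x\<in>A \<beta>. u (f \<beta> \<alpha> x) = k \<beta> x) \<and>
             (\<forall>u'. cpo_map (A \<alpha>) (le \<alpha>) C s u' \<and> (\<forall>\<beta><\<alpha>. \<forall>x\<in>A \<beta>. u' (f \<beta> \<alpha> x) = k \<beta> x)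
                   \<longrightarrow> (\<forall>y\<in>A \<alpha>. u' y = u y))))"

text \<open>The coproduct \<kappa>\<cdot>3 of \<kappa> = |K| copies of the chain 3 = {0<1<2}: disjoint union with the
  least elements identified.  None is the common bottom; Some (k,i), i \<in> {1,2}, are the
  nonzero elements of the k-th copy.\<close>
definition kappa3 :: "'k set \<Rightarrow> ('k \<times> nat) option set" where
  "kappa3 K = {None} \<union> {Some (k, i) | k i. k \<in> K \<and> i \<in> {1, 2}}"

fun kappa3_le :: "('k \<times> nat) option \<Rightarrow> ('k \<times> nat) option \<Rightarrow> bool" where
  "kappa3_le None _ = True"
| "kappa3_le (Some _) None = False"
| "kappa3_le (Some (k, i)) (Some (k', j)) = (k = k' \<and> i \<le> j)"

definition order_iso :: "'a set \<Rightarrow> ('a \<Rightarrow> 'a \<Rightarrow> bool) \<Rightarrow> 'b set \<Rightarrow> ('b \<Rightarrow> 'b \<Rightarrow> bool) \<Rightarrow> bool" where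
  "order_iso S r T s \<longleftrightarrow> (\<exists>\<phi>. bij_betw \<phi> S T \<and> (\<forall>x\<in>S. \<forall>y\<in>S. r x y \<longleftrightarrow> s (\<phi> x) (\<phi> y)))"

definition is_least_idx :: "'o::wellorder \<Rightarrow> bool" where
  "is_least_idx \<alpha> \<longleftrightarrow> \<not> (\<exists>\<beta>. \<beta> < \<alpha>)"

definition is_succ_idx :: "'o::wellorder \<Rightarrow> 'o \<Rightarrow> bool" where
  "is_succ_idx \<alpha> \<sigma> \<longleftrightarrow> \<alpha> < \<sigma> \<and> \<not> (\<exists>\<gamma>. \<alpha> < \<gamma> \<and> \<gamma> < \<sigma>)"

definition is_limit_idx :: "'o::wellorder \<Rightarrow> bool" where
  "is_limit_idx \<alpha> \<longleftrightarrow> (\<exists>\<beta>. \<beta> < \<alpha>) \<and> (\<forall>\<beta><\<alpha>. \<exists>\<gamma>. \<beta> < \<gamma> \<and> \<gamma> < \<alpha>)"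

end

theory Submission
  imports Defs
begin

lemma kappa3_inj:
  includes cardinal_syntax
  assumes inf: "infinite (K::'k set)"
  shows "\<exists>\<psi>. inj_on \<psi> (kappa3 K) \<and> \<psi> ` kappa3 K \<subseteq> K"
proof -
  obtain k0 where k0: "k0 \<in> K" using inf by (metis finite.emptyI ex_in_conv)
  define \<chi> :: "('k \<times> nat) option \<Rightarrow> 'k \<times> nat" where "\<chi> = (\<lambda>x. case x of None \<Rightarrow> (k0, 0) | Some p \<Rightarrow> p)"
  have i1: "inj_on \<chi> (kappa3 K)" unfolding inj_on_def kappa3_def \<chi>_def by auto
  have s1: "\<chi> ` kappa3 K \<subseteq> K \<times> {0,1,2}" unfolding kappa3_def \<chi>_def using k0 by auto
  have "|{0,1,2::nat}| \<le>o |UNIV::nat set|" by (rule card_of_mono1) simp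
  then have h3: "|{0,1,2::nat}| \<le>o |K|" using inf infinite_iff_card_of_nat ordLeq_transitive by blast
  have "|K \<times> {0,1,2::nat}| =o |K|" by (rule conjunct1[OF card_of_Times_infinite[OF inf _ h3]]) simp
  then have "|K \<times> {0,1,2::nat}| \<le>o |K|" using ordIso_iff_ordLeq by auto
  then obtain g where g: "inj_on g (K \<times> {0,1,2::nat})" "g ` (K \<times> {0,1,2::nat}) \<subseteq> K"
    using card_of_ordLeq[of "K \<times> {0,1,2::nat}" K] by blast
  have "inj_on (g \<circ> \<chi>) (kappa3 K)" using i1 s1 g(1) by (meson comp_inj_on inj_on_subset)
  moreover have "(g \<circ> \<chi>) ` kappa3 K \<subseteq> K" using s1 g(2) by (metis image_comp image_mono order_trans)
  ultimately show ?thesis by blast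
qed

lemma po_refl: "is_po S r \<Longrightarrow> x \<in> S \<Longrightarrow> r x x"
  unfolding is_po_def by blast
lemma po_antisym: "is_po S r \<Longrightarrow> x \<in> S \<Longrightarrow> y \<in> S \<Longrightarrow> r x y \<Longrightarrow> r y x \<Longrightarrow> x = y"
  unfolding is_po_def by blast
lemma po_trans:
  assumes "is_po S r" "x \<in> S" "y \<in> S" "w \<in> S" "r x y" "r y w" shows "r x w"
proof -
  have t: "\<forall>x\<in>S. \<forall>y\<in>S. \<forall>z\<in>S. r x y \<and> r y z \<longrightarrow> r x z"
    using assms(1) unfolding is_po_def by (rule conjunct2[THEN conjunct2])
  show ?thesis using t[rule_format, OF assms(2-4)] assms(5,6) by blast
qed

lemma cpo_map_mono:
  assumes "is_po S r" "cpo_map S r T s f" "x \<in> S" "y \<in> S" "r x y"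
  shows "s (f x) (f y)"
proof -
  have ry: "r y y" using po_refl[OF assms(1,4)] .
  have rx: "r x x" using po_refl[OF assms(1,3)] .
  have c: "is_chain S r {x,y}" using assms rx ry unfolding is_chain_def by auto
  have j: "is_join S r {x,y} y" using assms ry unfolding is_join_def by auto
  have "is_join T s (f ` {x,y}) (f y)" using assms(2) c j unfolding cpo_map_def by blast
  then show ?thesis unfolding is_join_def by auto
qed

lemma cpo_map_comp:
  assumes "is_po S r" "cpo_map S r T s f" "cpo_map T s U t g"
  shows "cpo_map S r U t (\<lambda>x. g (f x))"
  unfolding cpo_map_def
proof (intro conjI allI impI)
  show "(\<lambda>x. g (f x)) ` S \<subseteq> U" using assms(2,3) unfolding cpo_map_def by (simp add: image_subset_iff)
  fix C x assume C: "is_chain S r C" and j: "is_join S r C x"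
  have fC: "f ` C \<subseteq> T" using C assms(2) unfolding is_chain_def cpo_map_def by blast
  have "\<forall>a\<in>C. \<forall>b\<in>C. s (f a) (f b) \<or> s (f b) (f a)"
    using C cpo_map_mono[OF assms(1,2)] unfolding is_chain_def by blast
  then have "is_chain T s (f ` C)" using fC unfolding is_chain_def by blast
  moreover have "is_join T s (f ` C) (f x)" using assms(2) C j unfolding cpo_map_def by blast
  ultimately have "is_join U t (g ` f ` C) (g (f x))" using assms(3) unfolding cpo_map_def by blast
  then show "is_join U t ((\<lambda>x. g (f x)) ` C) (g (f x))" by (simp add: image_image)
qed

lemma fin_chain_max:
  assumes po: "is_po S r" and "finite C" "C \<noteq> {}" "is_chain S r C"
  shows "\<exists>m\<in>C. \<forall>c\<in>C. r c m"
  using assms(2,3,4)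
proof (induction C rule: finite_ne_induct)
  case (singleton x) then show ?case using po_refl[OF po] unfolding is_chain_def by auto
next
  case (insert x F)
  have "is_chain S r F" using insert.prems unfolding is_chain_def by auto
  then obtain m where m: "m \<in> F" "\<forall>c\<in>F. r c m" using insert.IH by blast
  have xS: "x \<in> S" and mS: "m \<in> S" and FS: "F \<subseteq> S" using insert.prems m unfolding is_chain_def by auto
  have "r x m \<or> r m x" using insert.prems m unfolding is_chain_def by auto
  then show ?case
  proof
    assume "r x m" then show ?thesis using m by auto
  next
    assume "r m x"
    then have "\<forall>c\<in>F. r c x" using m po xS mS FS po_trans[OF po] by blast
    then show ?thesis using po_refl[OF po xS] by auto
  qed
qed

lemma fin_cpo:
  assumes "finite S" "is_po S r" "b \<in> S" "\<forall>x\<in>S. r b x"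
  shows "is_cpo S r"
  unfolding is_cpo_def
proof (intro conjI allI impI)
  show "is_po S r" by fact
  fix C assume C: "is_chain S r C"
  show "\<exists>x. is_join S r C x"
  proof (cases "C = {}")
    case True then show ?thesis using assms unfolding is_join_def by auto
  next
    case False
    have "finite C" using C assms(1) finite_subset unfolding is_chain_def by blast
    then obtain m where "m \<in> C" "\<forall>c\<in>C. r c m" using fin_chain_max[OF assms(2) _ False C] by blast
    then have "is_join S r C m" using C unfolding is_join_def is_chain_def by auto
    then show ?thesis by blast
  qed
qed

lemma fin_cpo_map:
  assumes fin: "finite S" and po: "is_po S r" and img: "f ` S \<subseteq> T"
    and mono: "\<forall>x\<in>S. \<forall>y\<in>S. r x y \<longrightarrow> s (f x) (f y)"
    and bot: "\<forall>x\<in>S. (\<forall>w\<in>S. r x w) \<longrightarrow> (\<forall>t\<in>T. s (f x) t)"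
  shows "cpo_map S r T s f"
  unfolding cpo_map_def
proof (intro conjI allI impI)
  show "f ` S \<subseteq> T" by fact
  fix C x assume C: "is_chain S r C" and j: "is_join S r C x"
  show "is_join T s (f ` C) (f x)"
  proof (cases "C = {}")
    case True
    then have "x \<in> S" "\<forall>w\<in>S. r x w" using j unfolding is_join_def by auto
    then show ?thesis using True bot img unfolding is_join_def by auto
  next
    case False
    have "finite C" using C fin finite_subset unfolding is_chain_def by blast
    then obtain m where m: "m \<in> C" "\<forall>c\<in>C. r c m" using fin_chain_max[OF po _ False C] by blast
    have mS: "m \<in> S" using m C unfolding is_chain_def by auto
    have xS: "x \<in> S" "r m x" "r x m" using j m mS unfolding is_join_def by auto
    then have "x = m" using mS po_antisym[OF po] by blast
    then show ?thesis using m mS mono C img unfolding is_join_def is_chain_def by auto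
  qed
qed

lemma T2_cpo: "is_cpo {{}, UNIV} (\<subseteq>)"
  unfolding is_cpo_def
proof (intro conjI allI impI)
  show "is_po {{}, UNIV} (\<subseteq>)" unfolding is_po_def by auto
  fix C assume C: "is_chain {{}, UNIV} (\<subseteq>) C"
  show "\<exists>x. is_join {{}, UNIV} (\<subseteq>) C x"
  proof (cases "UNIV \<in> C")
    case True then have "is_join {{}, UNIV} (\<subseteq>) C UNIV" unfolding is_join_def by auto
    then show ?thesis by blast
  next
    case False then have "C \<subseteq> {{}}" using C unfolding is_chain_def by auto
    then have "is_join {{}, UNIV} (\<subseteq>) C {}" unfolding is_join_def by auto
    then show ?thesis by blast
  qed
qed

lemma indicator_map:
  assumes po: "is_po S r" and y: "y \<in> S"
  shows "cpo_map S r {{}, UNIV} (\<subseteq>) (\<lambda>w. if r w y then {} else UNIV)"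
  unfolding cpo_map_def
proof (intro conjI allI impI)
  show "(\<lambda>w. if r w y then {} else UNIV) ` S \<subseteq> {{}, UNIV}" by auto
  fix C x assume C: "is_chain S r C" and j: "is_join S r C x"
  have xS: "x \<in> S" using j unfolding is_join_def by auto
  show "is_join {{}, UNIV} (\<subseteq>) ((\<lambda>w. if r w y then {} else UNIV) ` C) (if r x y then {} else UNIV)"
  proof (cases "r x y")
    case True
    have "\<forall>c\<in>C. r c x" "C \<subseteq> S" using j C unfolding is_join_def is_chain_def by auto
    then have "\<forall>c\<in>C. r c y" using True xS y po_trans[OF po] by blast
    then show ?thesis using True unfolding is_join_def by auto
  next
    case False
    have "\<exists>c\<in>C. \<not> r c y" using False j y unfolding is_join_def by blast
    then show ?thesis using False unfolding is_join_def by auto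
  qed
qed

lemma kappa3_eq: "kappa3 K = insert None (Some ` (K \<times> {1,2::nat}))"
  unfolding kappa3_def by auto

lemma kappa3_card: "finite K \<Longrightarrow> finite (kappa3 K) \<and> card (kappa3 K) = 2 * card K + 1"
  by (simp add: kappa3_eq card_image card_cartesian_product)


theorem mainTheorem3:
  fixes K :: "'k set"
    and A :: "'o::wellorder \<Rightarrow> 'a set"
    and le :: "'o \<Rightarrow> 'a \<Rightarrow> 'a \<Rightarrow> bool"
    and f :: "'o \<Rightarrow> 'o \<Rightarrow> 'a \<Rightarrow> 'a"
  assumes cpos: "\<forall>\<alpha>. is_cpo (A \<alpha>) (le \<alpha>)"
    and maps: "\<forall>\<alpha> \<beta>. \<alpha> \<le> \<beta> \<longrightarrow> cpo_map (A \<alpha>) (le \<alpha>) (A \<beta>) (le \<beta>) (f \<alpha> \<beta>)"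
    and comp: "\<forall>\<alpha> \<beta> \<gamma>. \<alpha> \<le> \<beta> \<and> \<beta> \<le> \<gamma> \<longrightarrow> (\<forall>x\<in>A \<alpha>. f \<beta> \<gamma> (f \<alpha> \<beta> x) = f \<alpha> \<gamma> x)"
    and ident: "\<forall>\<alpha>. \<forall>x\<in>A \<alpha>. f \<alpha> \<alpha> x = x"
    and base: "\<forall>\<alpha>. is_least_idx \<alpha> \<longrightarrow> order_iso (A \<alpha>) (le \<alpha>) (kappa3 K) kappa3_le"
    and succ: "\<forall>\<alpha> \<sigma>. is_succ_idx \<alpha> \<sigma> \<longrightarrow>
                 (\<exists>g h. cpo_map two_set two_le (A \<alpha>) (le \<alpha>) g \<and>
                        cpo_map two_set two_le (A \<alpha>) (le \<alpha>) h \<and>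
                        is_coequalizer TYPE(('o \<times> 'a) set) (A \<alpha>) (le \<alpha>) g h
                          (A \<sigma>) (le \<sigma>) (f \<alpha> \<sigma>))"
    and limit: "\<forall>\<alpha>. is_limit_idx \<alpha> \<longrightarrow> is_chain_colimit TYPE(('o \<times> 'a) set) A le f \<alpha>"
  shows "\<forall>\<alpha>. (infinite K \<longrightarrow> (\<exists>\<phi>. inj_on \<phi> (A \<alpha>) \<and> \<phi> ` A \<alpha> \<subseteq> Pow K)) \<and>
             (finite K \<longrightarrow> finite (A \<alpha>) \<and> card (A \<alpha>) \<le> 2 * card K + 1)"
proof -
  define z :: 'o where "z = (LEAST x. True)"
  have zle: "\<And>b. z \<le> b" unfolding z_def by (simp add: Least_le)
  have zleast: "is_least_idx z" unfolding is_least_idx_def using zle leD by blast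
  have po: "\<And>a. is_po (A a) (le a)" using cpos unfolding is_cpo_def by blast
  have KEY: "\<forall>(T::('o\<times>'a) set set) s \<phi> \<phi>'. is_cpo T s \<and> cpo_map (A a) (le a) T s \<phi> \<and>
      cpo_map (A a) (le a) T s \<phi>' \<and> (\<forall>x\<in>A z. \<phi> (f z a x) = \<phi>' (f z a x)) \<longrightarrow> (\<forall>y\<in>A a. \<phi> y = \<phi>' y)" for a
  proof (induction a rule: less_induct)
    case (less a)
    show ?case
    proof (intro allI impI, elim conjE)
      fix T :: "('o\<times>'a) set set" and s \<phi> \<phi>'
      assume T: "is_cpo T s" and m1: "cpo_map (A a) (le a) T s \<phi>" and m2: "cpo_map (A a) (le a) T s \<phi>'"
        and ag: "\<forall>x\<in>A z. \<phi> (f z a x) = \<phi>' (f z a x)"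
      have cm: "cpo_map (A b) (le b) T s (\<lambda>x. \<psi> (f b a x))"
        if "b \<le> a" "cpo_map (A a) (le a) T s \<psi>" for b \<psi>
        using cpo_map_comp[OF po, OF maps[rule_format, OF that(1)] that(2)] .
      have IHb: "\<forall>x\<in>A b. \<phi> (f b a x) = \<phi>' (f b a x)" if ba: "b < a" for b
      proof -
        have bale: "b \<le> a" using ba by simp
        have c1: "cpo_map (A b) (le b) T s (\<lambda>x. \<phi> (f b a x))" using cm[OF bale m1] .
        have c2: "cpo_map (A b) (le b) T s (\<lambda>x. \<phi>' (f b a x))" using cm[OF bale m2] .
        have a2: "\<forall>x\<in>A z. \<phi> (f b a (f z b x)) = \<phi>' (f b a (f z b x))"
        proof
          fix x assume x: "x \<in> A z"
          have "f b a (f z b x) = f z a x" using comp zle bale x by blast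
          then show "\<phi> (f b a (f z b x)) = \<phi>' (f b a (f z b x))" using ag x by simp
        qed
        show ?thesis
          using less.IH[OF ba, THEN spec[of _ T], THEN spec[of _ s], THEN spec[of _ "\<lambda>x. \<phi> (f b a x)"],
              THEN spec[of _ "\<lambda>x. \<phi>' (f b a x)"]] T c1 c2 a2 by blast
      qed
      have "a = z \<or> is_limit_idx a \<or> (\<exists>b. is_succ_idx b a)"
      proof (cases "a = z")
        case False
        then have "z < a" using zle[of a] by simp
        show ?thesis
        proof (cases "is_limit_idx a")
          case False
          then obtain b where "b < a" "\<not> (\<exists>\<gamma>. b < \<gamma> \<and> \<gamma> < a)" using \<open>z < a\<close> unfolding is_limit_idx_def by blast
          then have "is_succ_idx b a" unfolding is_succ_idx_def by blast
          then show ?thesis by blast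
        qed simp
      qed simp
      then consider (least) "a = z" | (lim) "is_limit_idx a" | (suc) b where "is_succ_idx b a" by blast
      then show "\<forall>y\<in>A a. \<phi> y = \<phi>' y"
      proof cases
        case least
        show ?thesis
        proof
          fix y assume y: "y \<in> A a"
          then have "f z a y = y" using ident least by blast
          then show "\<phi> y = \<phi>' y" using bspec[OF ag[unfolded least] y[unfolded least]] least by simp
        qed
      next
        case suc
        then have ba: "b < a" unfolding is_succ_idx_def by blast
        obtain g h where co: "is_coequalizer TYPE(('o\<times>'a) set) (A b) (le b) g h (A a) (le a) (f b a)"
          using succ suc by blast
        have eq: "\<forall>x. f b a (g x) = f b a (h x)" using co unfolding is_coequalizer_def by blast
        have U: "\<forall>(C::('o\<times>'a) set set) s k. is_cpo C s \<and> cpo_map (A b) (le b) C s k \<and> (\<forall>x. k (g x) = k (h x)) \<longrightarrow>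
          (\<exists>u. cpo_map (A a) (le a) C s u \<and> (\<forall>x\<in>A b. u (f b a x) = k x) \<and>
            (\<forall>u'. cpo_map (A a) (le a) C s u' \<and> (\<forall>x\<in>A b. u' (f b a x) = k x) \<longrightarrow> (\<forall>y\<in>A a. u' y = u y)))"
          using co unfolding is_coequalizer_def by blast
        have c1: "cpo_map (A b) (le b) T s (\<lambda>x. \<phi> (f b a x))" using cm[OF _ m1] ba by simp
        obtain u where u: "\<forall>u'. cpo_map (A a) (le a) T s u' \<and> (\<forall>x\<in>A b. u' (f b a x) = \<phi> (f b a x))
             \<longrightarrow> (\<forall>y\<in>A a. u' y = u y)"
        proof -
          have pre: "\<forall>x. \<phi> (f b a (g x)) = \<phi> (f b a (h x))" using eq by simp
          from mp[OF U[THEN spec[of _ T], THEN spec[of _ s], THEN spec[of _ "\<lambda>x. \<phi> (f b a x)"]] conjI[OF T conjI[OF c1 pre]]]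
          show ?thesis using that by blast
        qed
        have "\<forall>y\<in>A a. \<phi> y = u y" using spec[OF u, of \<phi>] m1 by blast
        moreover have "\<forall>x\<in>A b. \<phi>' (f b a x) = \<phi> (f b a x)" using IHb[OF ba] by simp
        then have "\<forall>y\<in>A a. \<phi>' y = u y" using spec[OF u, of \<phi>'] m2 by blast
        ultimately show ?thesis by simp
      next
        case lim
        have col: "is_chain_colimit TYPE(('o\<times>'a) set) A le f a" using limit lim by blast
        have U: "\<forall>(C::('o\<times>'a) set set) s (k::'o \<Rightarrow> 'a \<Rightarrow> ('o\<times>'a) set). is_cpo C s \<and>
            (\<forall>\<beta><a. cpo_map (A \<beta>) (le \<beta>) C s (k \<beta>)) \<and>
            (\<forall>\<beta> \<gamma>. \<beta> \<le> \<gamma> \<and> \<gamma> < a \<longrightarrow> (\<forall>x\<in>A \<beta>. k \<gamma> (f \<beta> \<gamma> x) = k \<beta> x)) \<longrightarrow>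
          (\<exists>u. cpo_map (A a) (le a) C s u \<and> (\<forall>\<beta><a. \<forall>x\<in>A \<beta>. u (f \<beta> a x) = k \<beta> x) \<and>
             (\<forall>u'. cpo_map (A a) (le a) C s u' \<and> (\<forall>\<beta><a. \<forall>x\<in>A \<beta>. u' (f \<beta> a x) = k \<beta> x)
                   \<longrightarrow> (\<forall>y\<in>A a. u' y = u y)))"
          using col unfolding is_chain_colimit_def by blast
        define k where "k = (\<lambda>\<beta> x. \<phi> (f \<beta> a x))"
        have k1: "\<forall>\<beta><a. cpo_map (A \<beta>) (le \<beta>) T s (k \<beta>)" unfolding k_def using cm[OF _ m1] by simp
        have k2: "\<forall>\<beta> \<gamma>. \<beta> \<le> \<gamma> \<and> \<gamma> < a \<longrightarrow> (\<forall>x\<in>A \<beta>. k \<gamma> (f \<beta> \<gamma> x) = k \<beta> x)"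
        proof (intro allI impI ballI, elim conjE)
          fix \<beta> \<gamma> x assume "\<beta> \<le> \<gamma>" "\<gamma> < a" "x \<in> A \<beta>"
          then have "f \<gamma> a (f \<beta> \<gamma> x) = f \<beta> a x" using comp by (meson less_imp_le)
          then show "k \<gamma> (f \<beta> \<gamma> x) = k \<beta> x" unfolding k_def by simp
        qed
        obtain u where u: "\<forall>u'. cpo_map (A a) (le a) T s u' \<and> (\<forall>\<beta><a. \<forall>x\<in>A \<beta>. u' (f \<beta> a x) = k \<beta> x)
                   \<longrightarrow> (\<forall>y\<in>A a. u' y = u y)"
        proof -
          from mp[OF U[THEN spec[of _ T], THEN spec[of _ s], THEN spec[of _ k]] conjI[OF T conjI[OF k1 k2]]]
          show ?thesis using that by blast
        qed
        have "\<forall>y\<in>A a. \<phi> y = u y" using spec[OF u, of \<phi>] m1 unfolding k_def by blast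
        moreover have "\<forall>\<beta><a. \<forall>x\<in>A \<beta>. \<phi>' (f \<beta> a x) = k \<beta> x" using IHb unfolding k_def by simp
        then have "\<forall>y\<in>A a. \<phi>' y = u y" using spec[OF u, of \<phi>'] m2 by blast
        ultimately show ?thesis by simp
      qed
    qed
  qed
  have bz: "order_iso (A z) (le z) (kappa3 K) kappa3_le" using base zleast by blast
  then obtain \<psi>0 where \<psi>0: "bij_betw \<psi>0 (A z) (kappa3 K)" unfolding order_iso_def by blast
  define D where "D = (\<lambda>a y. {x \<in> A z. le a (f z a x) y})"
  have injD: "inj_on (D a) (A a)" for a
  proof (rule inj_onI)
    fix y1 y2 assume y1: "y1 \<in> A a" and y2: "y2 \<in> A a" and eqD: "D a y1 = D a y2"
    define \<phi> where "\<phi> = (\<lambda>y w. if le a w y then ({}::('o\<times>'a) set) else UNIV)"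
    have \<phi>m: "cpo_map (A a) (le a) {{},UNIV} (\<subseteq>) (\<phi> y)" if "y \<in> A a" for y
      unfolding \<phi>_def using indicator_map[OF po that] .
    have iff: "le a (f z a x) y1 \<longleftrightarrow> le a (f z a x) y2" if "x \<in> A z" for x
      using eqD that unfolding D_def by blast
    have ag: "\<forall>x\<in>A z. \<phi> y1 (f z a x) = \<phi> y2 (f z a x)" using iff unfolding \<phi>_def by simp
    have all: "\<forall>w\<in>A a. \<phi> y1 w = \<phi> y2 w"
      using KEY[of a, THEN spec[of _ "{{},UNIV}"], THEN spec[of _ "(\<subseteq>)"], THEN spec[of _ "\<phi> y1"],
          THEN spec[of _ "\<phi> y2"]] T2_cpo \<phi>m[OF y1] \<phi>m[OF y2] ag by blast
    have r1: "le a y1 y1" "le a y2 y2" using po_refl[OF po y1] po_refl[OF po y2] by auto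
    have "\<phi> y1 y1 = \<phi> y2 y1" using all y1 by blast
    then have "le a y1 y2" using r1 unfolding \<phi>_def by (simp split: if_splits)
    moreover have "\<phi> y1 y2 = \<phi> y2 y2" using all y2 by blast
    then have "le a y2 y1" using r1 unfolding \<phi>_def by (simp split: if_splits)
    ultimately show "y1 = y2" using po_antisym[OF po y1 y2] by blast
  qed
  have Dsub: "D a ` A a \<subseteq> Pow (A z)" for a unfolding D_def by auto
  show ?thesis
  proof (intro allI)
    fix a
    have infpart: "infinite K \<longrightarrow> (\<exists>\<phi>. inj_on \<phi> (A a) \<and> \<phi> ` A a \<subseteq> Pow K)"
    proof
      assume inf: "infinite K"
      obtain \<psi>1 where \<psi>1: "inj_on \<psi>1 (kappa3 K)" "\<psi>1 ` kappa3 K \<subseteq> K" using kappa3_inj[OF inf] by blast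
      have i01: "inj_on (\<psi>1 \<circ> \<psi>0) (A z)" using \<psi>0 \<psi>1 by (metis bij_betw_def comp_inj_on)
      have s01: "(\<psi>1 \<circ> \<psi>0) ` A z \<subseteq> K" using \<psi>0 \<psi>1 unfolding bij_betw_def by (metis image_comp)
      have "inj_on (image (\<psi>1 \<circ> \<psi>0) \<circ> D a) (A a)"
        using comp_inj_on[OF injD inj_on_subset[OF inj_on_image_Pow[OF i01] Dsub]] .
      moreover have "(image (\<psi>1 \<circ> \<psi>0) \<circ> D a) ` A a \<subseteq> Pow K" using Dsub s01 by fastforce
      ultimately show "\<exists>\<phi>. inj_on \<phi> (A a) \<and> \<phi> ` A a \<subseteq> Pow K" by blast
    qed
    have finpart: "finite K \<longrightarrow> finite (A a) \<and> card (A a) \<le> 2 * card K + 1"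
    proof
      assume fK: "finite K"
      have Azfin: "finite (A z)" using kappa3_card[OF fK] bij_betw_finite[OF \<psi>0] by blast
      have cardz: "card (A z) = 2 * card K + 1" using kappa3_card[OF fK] bij_betw_same_card[OF \<psi>0] by simp
      have Afin: "finite (A a)" using inj_on_finite[OF injD Dsub] Azfin by simp
      have sur: "A a \<subseteq> f z a ` A z"
      proof
        fix y assume y: "y \<in> A a"
        show "y \<in> f z a ` A z"
        proof (rule ccontr)
          assume ny: "y \<notin> f z a ` A z"
          obtain bz where bz: "is_join (A z) (le z) {} bz"
            using cpos unfolding is_cpo_def is_chain_def by blast
          have bzA: "bz \<in> A z" using bz unfolding is_join_def by simp
          have "is_join (A a) (le a) (f z a ` {}) (f z a bz)"
            using maps zle bz unfolding cpo_map_def is_chain_def by blast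
          then have botA: "f z a bz \<in> A a" "\<forall>w\<in>A a. le a (f z a bz) w" unfolding is_join_def by auto
          define bot where "bot = f z a bz"
          have yne: "y \<noteq> bot" using ny bzA unfolding bot_def by blast
          define emb :: "'a \<Rightarrow> ('o\<times>'a) set" where "emb = (\<lambda>w. {(z,w)})"
          define dec where "dec = (\<lambda>X::('o\<times>'a) set. if X = {} then y else snd (the_elem X))"
          define Q where "Q = insert {} (emb ` A a)"
          define sQ where "sQ = (\<lambda>X Y. X = Y \<or> (le a (dec X) (dec Y) \<and> dec X \<noteq> dec Y))"
          define \<iota> where "\<iota> = (\<lambda>w. if w = y then {} else emb w)"
          have dec_emb: "dec (emb w) = w" for w by (simp add: dec_def emb_def)
          have dec_e: "dec {} = y" by (simp add: dec_def)
          have decQ: "dec X \<in> A a" if "X \<in> Q" for X using y that unfolding Q_def by (auto simp: dec_emb dec_e)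
          have poQ: "is_po Q sQ" unfolding is_po_def
          proof (intro conjI ballI impI)
            fix X assume "X \<in> Q" then show "sQ X X" unfolding sQ_def by simp
          next
            fix X Y assume XY: "X \<in> Q" "Y \<in> Q" "sQ X Y \<and> sQ Y X"
            then show "X = Y" using po_antisym[OF po decQ[OF XY(1)] decQ[OF XY(2)]] unfolding sQ_def by blast
          next
            fix X Y W assume XY: "X \<in> Q" "Y \<in> Q" "W \<in> Q" "sQ X Y \<and> sQ Y W"
            show "sQ X W"
            proof (cases "X = Y \<or> Y = W")
              case True then show ?thesis using XY unfolding sQ_def by auto
            next
              case False
              then have h: "le a (dec X) (dec Y)" "le a (dec Y) (dec W)" "dec X \<noteq> dec Y" "dec Y \<noteq> dec W"
                using XY unfolding sQ_def by auto
              have "le a (dec X) (dec W)" using po_trans[OF po decQ[OF XY(1)] decQ[OF XY(2)] decQ[OF XY(3)] h(1) h(2)] .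
              moreover have "dec X \<noteq> dec W" using h po_antisym[OF po decQ[OF XY(1)] decQ[OF XY(2)]] by auto
              ultimately show ?thesis unfolding sQ_def by simp
            qed
          qed
          have finQ: "finite Q" unfolding Q_def using Afin by simp
          have botQ: "\<forall>X\<in>Q. sQ (emb bot) X"
          proof
            fix X assume X: "X \<in> Q"
            have "le a bot (dec X)" using botA decQ[OF X] unfolding bot_def by blast
            moreover have "dec X = bot \<Longrightarrow> X = emb bot"
              using X yne dec_emb dec_e unfolding Q_def by auto
            ultimately show "sQ (emb bot) X" unfolding sQ_def dec_emb by auto
          qed
          have embQ: "emb bot \<in> Q" using botA unfolding Q_def bot_def by simp
          have cpoQ: "is_cpo Q sQ" using fin_cpo[OF finQ poQ embQ botQ] .
          have isbot: "x = bot" if "x \<in> A a" "\<forall>w\<in>A a. le a x w" for x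
            using that botA po_antisym[OF po[of a] that(1) botA(1)] unfolding bot_def by blast
          have m1: "cpo_map (A a) (le a) Q sQ emb"
          proof (rule fin_cpo_map[OF Afin po])
            show "emb ` A a \<subseteq> Q" unfolding Q_def by auto
            show "\<forall>x\<in>A a. \<forall>y\<in>A a. le a x y \<longrightarrow> sQ (emb x) (emb y)" unfolding sQ_def dec_emb by auto
            show "\<forall>x\<in>A a. (\<forall>w\<in>A a. le a x w) \<longrightarrow> (\<forall>t\<in>Q. sQ (emb x) t)" using isbot botQ by blast
          qed
          have dec\<iota>: "dec (\<iota> w) = w" for w unfolding \<iota>_def by (simp add: dec_emb dec_e)
          have \<iota>eq: "\<iota> w1 = \<iota> w2 \<longleftrightarrow> w1 = w2" for w1 w2 using dec\<iota> by metis
          have m2: "cpo_map (A a) (le a) Q sQ \<iota>"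
          proof (rule fin_cpo_map[OF Afin po])
            show "\<iota> ` A a \<subseteq> Q" unfolding Q_def \<iota>_def by auto
            show "\<forall>x\<in>A a. \<forall>y\<in>A a. le a x y \<longrightarrow> sQ (\<iota> x) (\<iota> y)" unfolding sQ_def dec\<iota> \<iota>eq by auto
            have "\<iota> bot = emb bot" using yne unfolding \<iota>_def by auto
            then show "\<forall>x\<in>A a. (\<forall>w\<in>A a. le a x w) \<longrightarrow> (\<forall>t\<in>Q. sQ (\<iota> x) t)" using isbot botQ by metis
          qed
          have ag: "\<forall>x\<in>A z. emb (f z a x) = \<iota> (f z a x)" using ny unfolding \<iota>_def by auto
          have "\<forall>w\<in>A a. emb w = \<iota> w"
            using KEY[of a, THEN spec[of _ Q], THEN spec[of _ sQ], THEN spec[of _ emb],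
              THEN spec[of _ \<iota>]] cpoQ m1 m2 ag by blast
          then have "emb y = \<iota> y" using y by blast
          then show False unfolding emb_def \<iota>_def by simp
        qed
      qed
      have "card (A a) \<le> card (f z a ` A z)" using card_mono[OF finite_imageI[OF Azfin] sur] .
      also have "\<dots> \<le> card (A z)" by (rule card_image_le[OF Azfin])
      finally show "finite (A a) \<and> card (A a) \<le> 2 * card K + 1" using Afin cardz by simp
    qed
    show "(infinite K \<longrightarrow> (\<exists>\<phi>. inj_on \<phi> (A a) \<and> \<phi> ` A a \<subseteq> Pow K)) \<and>
             (finite K \<longrightarrow> finite (A a) \<and> card (A a) \<le> 2 * card K + 1)" using infpart finpart by blast
  qed
qed

end
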